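(* Let $d>1$ be a non-integer rational number and $\mu\ge\lceil d\rceil -1$ an integer. Then the discounted-sum aggregate function $A\mapsto \mathrm{DS}(A,d)$ on $\{0,\dots,\mu\}^\omega$ is not $\omega$-regular under any integer base $\beta\ge2$.
   Context: $\mathrm{DS}(A,d)=\sum_{i\ge0}A[i]/d^i$. For an integer $\beta\ge2$ and $x\in\mathbb{R}$, $\mathrm{rep}(x,\beta)$ is the $\omega$-word consisting of the sign of $x$ ($+$ if $x\ge0$, $-$ otherwise) followed by the interleaving of $\mathrm{Int}(x,\beta)=z_0z_1\cdots\in\{0,\dots,\beta-1\}^*0^\omega$ and $\mathrm{Frac}(x,\beta)=f_1f_2\cdots\notin\{0,\dots,\beta-1\}^*(\beta-1)^\omega$, the unique words with $|x|=\sum_{i\ge0}z_i\beta^i+\sum_{i\ge1}f_i\beta^{-i}$; its alphabet is $\mathrm{AlphaRep}(\beta)=\{+,-\}\cup\{0,\dots,\beta-1\}$. A function $f:\Sigma^\omega\to\mathbb{R}$ is $\omega$-regular under base $\beta$ if there is a B\"uchi automaton over $\Sigma\times\mathrm{AlphaRep}(\beta)$ that accepts $(A,\mathrm{rep}(x,\beta))$ (read synchronously) iff $f(A)=x$, for all $A\in\Sigma^\omega$, $x\in\mathbb{R}$. *)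

theory Defs
  imports Complex_Main
begin

definition DS :: "(nat \<Rightarrow> nat) \<Rightarrow> real \<Rightarrow> real" where
  "DS A d = (\<Sum>i. real (A i) / d ^ i)"

datatype alpha_rep = Plus | Minus | Dig nat

definition alpha_rep_set :: "nat \<Rightarrow> alpha_rep set" where
  "alpha_rep_set \<beta> = {Plus, Minus} \<union> Dig ` {..<\<beta>}"

definition int_digits :: "real \<Rightarrow> nat \<Rightarrow> nat \<Rightarrow> nat" where
  "int_digits x \<beta> i = nat ((\<lfloor>\<bar>x\<bar>\<rfloor> div int \<beta> ^ i) mod int \<beta>)"

text \<open>Frac(x,beta): f_i (i \<ge> 1) is the i-th digit after the point of |x|, the greedy expansion,
  which is the unique one not ending in (beta-1)^omega.\<close>
definition frac_digits :: "real \<Rightarrow> nat \<Rightarrow> nat \<Rightarrow> nat" where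
  "frac_digits x \<beta> i = nat (\<lfloor>\<bar>x\<bar> * real \<beta> ^ i\<rfloor> mod int \<beta>)"

text \<open>rep(x,beta) = sign, z_0, f_1, z_1, f_2, z_2, ...\<close>
definition rep :: "real \<Rightarrow> nat \<Rightarrow> nat \<Rightarrow> alpha_rep" where
  "rep x \<beta> n =
     (if n = 0 then (if x \<ge> 0 then Plus else Minus)
      else if odd n then Dig (int_digits x \<beta> ((n - 1) div 2))
      else Dig (frac_digits x \<beta> (n div 2)))"

record 'a buchi =
  states :: "nat set"
  init :: "nat set"
  trans :: "(nat \<times> 'a \<times> nat) set"
  acc :: "nat set"

definition wf_buchi :: "'a set \<Rightarrow> 'a buchi \<Rightarrow> bool" where
  "wf_buchi \<Sigma> B \<longleftrightarrow> finite (states B) \<and> init B \<subseteq> states B \<and> acc B \<subseteq> states B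
     \<and> trans B \<subseteq> states B \<times> \<Sigma> \<times> states B"

definition buchi_accepts :: "'a buchi \<Rightarrow> (nat \<Rightarrow> 'a) \<Rightarrow> bool" where
  "buchi_accepts B w \<longleftrightarrow>
     (\<exists>r :: nat \<Rightarrow> nat. r 0 \<in> init B \<and> (\<forall>i. (r i, w i, r (Suc i)) \<in> trans B)
        \<and> (\<exists>\<^sub>\<infinity>i. r i \<in> acc B))"

definition omega_regular_fun :: "'s set \<Rightarrow> nat \<Rightarrow> ((nat \<Rightarrow> 's) \<Rightarrow> real) \<Rightarrow> bool" where
  "omega_regular_fun \<Sigma> \<beta> f \<longleftrightarrow>
     (\<exists>B :: ('s \<times> alpha_rep) buchi. wf_buchi (\<Sigma> \<times> alpha_rep_set \<beta>) B \<and>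
        (\<forall>A x. (\<forall>i. A i \<in> \<Sigma>) \<longrightarrow>
           (buchi_accepts B (\<lambda>i. (A i, rep x \<beta> i)) \<longleftrightarrow> f A = x)))"

end

theory Submission
  imports Defs "HOL-Library.FuncSet"
begin

lemma summable_DS:
  assumes "d > 1" "\<And>i. A i \<le> K"
  shows "summable (\<lambda>i. real (A i) / d ^ i)"
proof (rule summable_comparison_test)
  show "\<exists>N. \<forall>n\<ge>N. norm (real (A n) / d ^ n) \<le> real K * (1/d) ^ n"
    using assms by (auto intro!: divide_right_mono simp: power_divide)
  show "summable (\<lambda>n. real K * (1 / d) ^ n)"
    using assms by (intro summable_mult summable_geometric) auto
qed

lemma DS_agree:
  assumes "d > 1" "\<And>i. A i \<le> K" "\<And>i. B i \<le> K" "\<And>i. i \<ge> m \<Longrightarrow> A i = B i"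
  shows "DS A d - (\<Sum>i<m. real (A i) / d ^ i) = DS B d - (\<Sum>i<m. real (B i) / d ^ i)"
proof -
  have "(\<lambda>i. real (A (i+m)) / d ^ (i+m)) sums (DS A d - (\<Sum>i<m. real (A i) / d ^ i))"
    unfolding DS_def using sums_iff_shift[of "\<lambda>i. real (A i) / d ^ i" m] summable_DS[OF assms(1,2)]
    by (simp add: summable_sums)
  moreover have "(\<lambda>i. real (B (i+m)) / d ^ (i+m)) sums (DS B d - (\<Sum>i<m. real (B i) / d ^ i))"
    unfolding DS_def using sums_iff_shift[of "\<lambda>i. real (B i) / d ^ i" m] summable_DS[OF assms(1,3)]
    by (simp add: summable_sums)
  moreover have "(\<lambda>i. real (A (i+m)) / d ^ (i+m)) = (\<lambda>i. real (B (i+m)) / d ^ (i+m))"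
    using assms(4) by auto
  ultimately show ?thesis using sums_unique2 by metis
qed

fun gseq :: "real \<Rightarrow> real \<Rightarrow> nat \<Rightarrow> real" where
  "gseq d y 0 = y"
| "gseq d y (Suc k) = d * (gseq d y k - of_int \<lfloor>gseq d y k\<rfloor>)"

lemma gseq_bounds:
  assumes "0 \<le> y" "y < d" "d > 1"
  shows "0 \<le> gseq d y k \<and> gseq d y k < d"
proof (induction k)
  case 0 then show ?case using assms by simp
next
  case (Suc k)
  have "0 \<le> gseq d y k - of_int \<lfloor>gseq d y k\<rfloor>" "gseq d y k - of_int \<lfloor>gseq d y k\<rfloor> < 1"
    by linarith+
  then show ?case using assms by (simp add: mult_nonneg_nonneg)
qed

lemma gseq_partial:
  assumes "d > 1"
  shows "(\<Sum>i<k. of_int \<lfloor>gseq d y i\<rfloor> / d ^ i) = y - gseq d y k / d ^ k"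
proof (induction k)
  case 0 then show ?case by simp
next
  case (Suc k)
  have dk: "d ^ k > 0" using assms by simp
  have e: "gseq d y (Suc k) / d ^ Suc k = (gseq d y k - of_int \<lfloor>gseq d y k\<rfloor>) / d ^ k"
    using assms by simp
  show ?case using Suc unfolding e by (simp add: diff_divide_distrib)
qed

lemma greedy:
  assumes "0 \<le> y" "y < d" "d > 1"
  shows "\<exists>A. (\<forall>i. A i \<le> nat \<lfloor>d\<rfloor>) \<and> DS A d = y"
proof -
  define A where "A i = nat \<lfloor>gseq d y i\<rfloor>" for i
  have bd: "0 \<le> gseq d y k \<and> gseq d y k < d" for k using gseq_bounds assms by blast
  have A1: "real (A i) = of_int \<lfloor>gseq d y i\<rfloor>" for i using bd[of i] by (simp add: A_def)
  have A2: "A i \<le> nat \<lfloor>d\<rfloor>" for i using bd[of i] unfolding A_def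
    by (simp add: floor_mono nat_mono)
  have lim: "(\<lambda>k. gseq d y k / d ^ k) \<longlonglongrightarrow> 0"
  proof (rule real_tendsto_sandwich[where f="\<lambda>_. 0" and h="\<lambda>k. d * (1/d)^k"])
    show "\<forall>\<^sub>F n in sequentially. 0 \<le> gseq d y n / d ^ n" using bd assms by auto
    show "\<forall>\<^sub>F n in sequentially. gseq d y n / d ^ n \<le> d * (1 / d) ^ n"
  proof (intro always_eventually allI)
      fix n
      have "gseq d y n / d ^ n \<le> d / d ^ n" using bd[of n] assms
        by (intro divide_right_mono) auto
      then show "gseq d y n / d ^ n \<le> d * (1 / d) ^ n" by (simp add: power_divide)
    qed
    show "(\<lambda>_. 0) \<longlonglongrightarrow> (0::real)" by simp
    show "(\<lambda>k. d * (1 / d) ^ k) \<longlonglongrightarrow> 0"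
      using assms by (intro tendsto_mult_right_zero LIMSEQ_realpow_zero) auto
  qed
  have "(\<lambda>i. real (A i) / d ^ i) sums y"
    unfolding sums_def A1 gseq_partial[OF assms(3)]
    using tendsto_diff[OF tendsto_const[of y] lim] by simp
  then have "DS A d = y" unfolding DS_def by (simp add: sums_unique[symmetric])
  with A2 show ?thesis by blast
qed

lemma coeff_zero:
  fixes p q :: int
  assumes "coprime p q" "p > 0"
  shows "(\<forall>i<m. \<bar>c i\<bar> < p) \<Longrightarrow> (\<Sum>i<m. c i * q ^ i * p ^ (m - i)) = 0 \<Longrightarrow> \<forall>i<m. c i = 0"
proof (induction m)
  case 0 then show ?case by simp
next
  case (Suc m)
  define S where "S = (\<Sum>i<m. c i * q ^ i * p ^ (m - i))"
  have eq: "(\<Sum>i<Suc m. c i * q ^ i * p ^ (Suc m - i)) = p * (c m * q ^ m + S)"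
  proof -
    have "(\<Sum>i<m. c i * q ^ i * p ^ (Suc m - i)) = (\<Sum>i<m. p * (c i * q ^ i * p ^ (m - i)))"
    proof (rule sum.cong)
      fix i assume "i \<in> {..<m}"
      then have "Suc m - i = Suc (m - i)" by simp
      then show "c i * q ^ i * p ^ (Suc m - i) = p * (c i * q ^ i * p ^ (m - i))"
        by (simp only: power_Suc mult.left_commute)
    qed simp
    also have "\<dots> = p * S" unfolding S_def by (simp only: sum_distrib_left)
    finally have e1: "(\<Sum>i<m. c i * q ^ i * p ^ (Suc m - i)) = p * S" .
    have "(\<Sum>i<Suc m. c i * q ^ i * p ^ (Suc m - i)) = (\<Sum>i<m. c i * q ^ i * p ^ (Suc m - i)) + c m * q ^ m * p ^ (Suc m - m)"
      by (rule sum.lessThan_Suc)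
    also have "\<dots> = p * S + c m * q ^ m * p" by (simp add: e1)
    also have "\<dots> = p * (c m * q ^ m + S)" by (simp only: distrib_left mult.commute add.commute)
    finally show ?thesis .
  qed
  have "p * (c m * q ^ m + S) = 0" using Suc.prems(2) unfolding eq .
  then have h0: "c m * q ^ m + S = 0" using assms(2) by (simp only: mult_eq_0_iff) simp
  have "p dvd S" unfolding S_def
  proof (rule dvd_sum)
    fix i assume "i \<in> {..<m}"
    then have "p dvd p ^ (m - i)" by (simp add: dvd_power)
    then show "p dvd c i * q ^ i * p ^ (m - i)" by (rule dvd_mult)
  qed
  then have "p dvd - S" by (simp only: dvd_minus_iff)
  moreover have "c m * q ^ m = - S" using h0 by linarith
  ultimately have "p dvd c m * q ^ m" by simp
  moreover have "coprime p (q ^ m)" using assms(1) by simp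
  ultimately have "p dvd c m" using coprime_dvd_mult_left_iff by blast
  have cm: "c m = 0"
  proof (rule ccontr)
    assume "c m \<noteq> 0"
    then have "\<bar>p\<bar> \<le> \<bar>c m\<bar>" using \<open>p dvd c m\<close> by (rule dvd_imp_le_int)
    then show False using Suc.prems(1) assms(2) by auto
  qed
  then have "S = 0" using h0 by simp
  then have S0: "(\<Sum>i<m. c i * q ^ i * p ^ (m - i)) = 0" unfolding S_def .
  have pr: "\<forall>i<m. \<bar>c i\<bar> < p" using Suc.prems(1) by simp
  have IH: "\<forall>i<m. c i = 0" using Suc.IH[OF pr S0] .
  show ?case
  proof (intro allI impI)
    fix i assume "i < Suc m"
    then have "i < m \<or> i = m" by linarith
    then show "c i = 0" using IH cm by blast
  qed
qed

lemma pigeon: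
  assumes "finite T" "f ` S \<subseteq> T" "card S > n * card T" "finite S"
  shows "\<exists>t\<in>T. card {u\<in>S. f u = t} > n"
proof (rule ccontr)
  assume "\<not> ?thesis"
  then have h: "\<forall>t\<in>T. card {u\<in>S. f u = t} \<le> n" by auto
  have "S = (\<Union>t\<in>T. {u\<in>S. f u = t})" using assms(2) by auto
  then have "card S \<le> (\<Sum>t\<in>T. card {u\<in>S. f u = t})" using card_UN_le[OF assms(1)] by metis
  also have "\<dots> \<le> (\<Sum>t\<in>T. n)" using h by (intro sum_mono) auto
  also have "\<dots> = n * card T" by simp
  finally show False using assms(3) by simp
qed

lemma run_states:
  assumes "wf_buchi S B" "r 0 \<in> init B" "\<forall>i. (r i, w i, r (Suc i)) \<in> trans B"
  shows "r i \<in> states B"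
proof (cases i)
  case 0 then show ?thesis using assms unfolding wf_buchi_def by auto
next
  case (Suc j) then show ?thesis using assms(1) assms(3)[rule_format, of j] unfolding wf_buchi_def by auto
qed

lemma splice_accept:
  assumes "ru 0 \<in> init B" "\<forall>i. (ru i, (X i, w i), ru (Suc i)) \<in> trans B"
    "\<forall>i. (rv i, (Y i, w i), rv (Suc i)) \<in> trans B" "\<exists>\<^sub>\<infinity>i. rv i \<in> acc B"
    "ru m = rv m"
  shows "buchi_accepts B (\<lambda>i. (if i < m then X i else Y i, w i))"
  unfolding buchi_accepts_def
proof (intro exI[of _ "\<lambda>i. if i \<le> m then ru i else rv i"] conjI allI)
  show "(if 0 \<le> m then ru 0 else rv 0) \<in> init B" using assms(1) by simp
next
  fix i
  show "((if i \<le> m then ru i else rv i), (if i < m then X i else Y i, w i),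
         (if Suc i \<le> m then ru (Suc i) else rv (Suc i))) \<in> trans B"
    using assms(2,3,5) by (cases "i < m"; cases "i = m"; auto)
next
  have "infinite {i. rv i \<in> acc B}" using assms(4) frequently_cofinite by blast
  then have "infinite ({i. rv i \<in> acc B} - {..m})" by (intro Diff_infinite_finite) auto
  moreover have "{i. rv i \<in> acc B} - {..m} \<subseteq> {i. (if i \<le> m then ru i else rv i) \<in> acc B}" by auto
  ultimately have "infinite {i. (if i \<le> m then ru i else rv i) \<in> acc B}" using finite_subset by blast
  then show "\<exists>\<^sub>\<infinity>i. (if i \<le> m then ru i else rv i) \<in> acc B" using frequently_cofinite by blast
qed

lemma DS_concat:
  assumes "d > 1" "\<And>i. t i \<le> K"
  shows "DS (\<lambda>i. if i < m then u i else t (i - m)) d = (\<Sum>i<m. real (u i) / d ^ i) + DS t d / d ^ m"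
proof -
  let ?A = "\<lambda>i. if i < m then u i else t (i - m)"
  have "(\<lambda>i. real (t i) / d ^ i / d ^ m) sums (DS t d / d ^ m)"
    unfolding DS_def using summable_DS[OF assms] by (intro sums_divide summable_sums)
  moreover have "(\<lambda>i. real (?A (i + m)) / d ^ (i + m)) = (\<lambda>i. real (t i) / d ^ i / d ^ m)"
    by (auto simp: power_add)
  ultimately have "(\<lambda>i. real (?A (i + m)) / d ^ (i + m)) sums (DS t d / d ^ m)" by simp
  then have "(\<lambda>i. real (?A i) / d ^ i) sums (DS t d / d ^ m + (\<Sum>i<m. real (?A i) / d ^ i))"
    using sums_iff_shift[of "\<lambda>i. real (?A i) / d ^ i" m] by simp
  moreover have "(\<Sum>i<m. real (?A i) / d ^ i) = (\<Sum>i<m. real (u i) / d ^ i)" by simp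
  ultimately have "(\<lambda>i. real (?A i) / d ^ i) sums ((\<Sum>i<m. real (u i) / d ^ i) + DS t d / d ^ m)"
    by (simp add: add.commute)
  then have "suminf (\<lambda>i. real (?A i) / d ^ i) = (\<Sum>i<m. real (u i) / d ^ i) + DS t d / d ^ m"
    by (rule sums_unique[symmetric])
  then show ?thesis by (simp add: DS_def[of ?A])
qed

lemma prefix_bound:
  assumes "d > 1" "\<And>i. i < m \<Longrightarrow> u i \<le> D"
  shows "(\<Sum>i<m. real (u i) / d ^ i) \<le> real D * d / (d - 1)"
proof -
  have "(\<Sum>i<m. real (u i) / d ^ i) \<le> (\<Sum>i<m. real D * (1/d) ^ i)"
    using assms by (intro sum_mono) (auto intro!: divide_right_mono simp: power_divide)
  also have "\<dots> \<le> (\<Sum>i. real D * (1/d) ^ i)"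
    using assms by (intro sum_le_suminf summable_mult summable_geometric) auto
  also have "\<dots> = real D * (1 / (1 - 1/d))"
    using assms by (subst suminf_mult, simp) (subst suminf_geometric, auto)
  also have "\<dots> = real D * d / (d - 1)" using assms by (simp add: field_simps)
  finally show ?thesis .
qed

lemma prefix_inj:
  fixes a b :: int
  assumes "coprime a b" "a > 0" "b > 0" "d = of_int a / of_int b"
    "\<And>i. i < m \<Longrightarrow> u i \<le> D" "\<And>i. i < m \<Longrightarrow> v i \<le> D" "int D < a"
    "(\<Sum>i<m. real (u i) / d ^ i) = (\<Sum>i<m. real (v i) / d ^ i)"
  shows "\<forall>i<m. u i = v i"
proof -
  define c where "c i = int (u i) - int (v i)" for i
  have "(\<Sum>i<m. (real (u i) - real (v i)) / d ^ i) = 0"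
    using assms(8) by (simp add: diff_divide_distrib sum_subtractf)
  then have "(\<Sum>i<m. (real (u i) - real (v i)) / d ^ i) * of_int a ^ m = 0" by simp
  moreover have "(\<Sum>i<m. (real (u i) - real (v i)) / d ^ i) * of_int a ^ m
     = of_int (\<Sum>i<m. c i * b ^ i * a ^ (m - i))"
    unfolding sum_distrib_right of_int_sum
  proof (rule sum.cong)
    fix i assume "i \<in> {..<m}"
    then have pa: "(of_int a :: real) ^ m = of_int a ^ i * of_int a ^ (m - i)"
      by (simp add: power_add[symmetric])
    have di: "d ^ i = of_int a ^ i / of_int b ^ i" by (simp add: assms(4) power_divide)
    show "(real (u i) - real (v i)) / d ^ i * of_int a ^ m = of_int (c i * b ^ i * a ^ (m - i))"
    proof -
      have gen: "(X::real) / (Ai / Bi) * (Ai * R) = X * Bi * R" if "Ai \<noteq> 0" "Bi \<noteq> 0" for X Ai Bi R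
        using that by (simp add: field_simps)
      have "(real (u i) - real (v i)) / d ^ i * of_int a ^ m =
        (real (u i) - real (v i)) / (of_int a ^ i / of_int b ^ i) * (of_int a ^ i * of_int a ^ (m - i))"
        using pa di by simp
      also have "\<dots> = (real (u i) - real (v i)) * of_int b ^ i * of_int a ^ (m - i)"
        using assms(2,3) by (intro gen) auto
      finally show ?thesis by (simp add: c_def)
    qed
  qed simp
  ultimately have "(\<Sum>i<m. c i * b ^ i * a ^ (m - i)) = 0" by linarith
  moreover have "\<forall>i<m. \<bar>c i\<bar> < a" using assms(5,6,7) by (force simp: c_def)
  ultimately have "\<forall>i<m. c i = 0" using coeff_zero[OF assms(1,2)] by blast
  then show ?thesis by (simp add: c_def)
qed

theorem theorem8:
  fixes d :: real and \<mu> :: nat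
  assumes "d \<in> \<rat>" and "d \<notin> \<int>" and "d > 1"
    and "int \<mu> \<ge> \<lceil>d\<rceil> - 1"
  shows "\<forall>\<beta>::nat. \<beta> \<ge> 2 \<longrightarrow> \<not> omega_regular_fun {0..\<mu>} \<beta> (\<lambda>A. DS A d)"
proof (intro allI impI)
  fix \<beta> :: nat assume "\<beta> \<ge> 2"
  obtain a b :: int where ab: "b > 0" "coprime a b" "d = of_int a / of_int b"
    using Rats_cases'[OF assms(1)] by metis
  have ad: "of_int a = d * of_int b" using ab(1,3) by (simp add: field_simps)
  have apos: "a > 0"
  proof -
    have "d * of_int b > 0" using ab(1) assms(3) by simp
    then show ?thesis using ad by linarith
  qed
  have b2: "b \<ge> 2"
  proof (rule ccontr)
    assume "\<not> b \<ge> 2"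
    then have "b = 1" using ab(1) by linarith
    then have "d \<in> \<int>" using ab(3) by simp
    then show False using assms(2) by simp
  qed
  define D where "D = nat \<lfloor>d\<rfloor>"
  have fl1: "\<lfloor>d\<rfloor> \<ge> 1" using assms(3) by (simp add: le_floor_iff)
  have DD: "real D = of_int \<lfloor>d\<rfloor>" using fl1 by (simp add: D_def)
  have D1: "real D \<le> d" "d < real D + 1" using DD by linarith+
  have Dmu: "D \<le> \<mu>"
  proof -
    have "d \<noteq> of_int \<lfloor>d\<rfloor>" using assms(2) by (metis Ints_of_int)
    then have "\<lceil>d\<rceil> = \<lfloor>d\<rfloor> + 1" by (simp add: ceiling_altdef)
    then show ?thesis using assms(4) fl1 by (simp add: D_def)
  qed
  have Da: "int D < a"
  proof -
    have "d * 2 \<le> d * of_int b" using b2 assms(3) by simp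
    then have "real D < of_int a" using D1 ad assms(3) by linarith
    then show ?thesis by linarith
  qed
  show "\<not> omega_regular_fun {0..\<mu>} \<beta> (\<lambda>A. DS A d)"
  proof
    assume "omega_regular_fun {0..\<mu>} \<beta> (\<lambda>A. DS A d)"
    then obtain B where wf: "wf_buchi ({0..\<mu>} \<times> alpha_rep_set \<beta>) B"
      and iff: "\<And>A x. (\<forall>i. A i \<in> {0..\<mu>}) \<Longrightarrow> buchi_accepts B (\<lambda>i. (A i, rep x \<beta> i)) \<longleftrightarrow> DS A d = x"
      unfolding omega_regular_fun_def by blast
    define n where "n = card (states B)"
    have fin: "finite (states B)" using wf unfolding wf_buchi_def by blast
    define c where "c = real D * d / (d - 1)"
    have c0: "c \<ge> 0" using assms(3) by (simp add: c_def)
    define r where "r = (real D + 1) / d"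
    have r1: "r > 1" using D1 assms(3) by (simp add: r_def)
    obtain m where m: "real n * (c + 2) < r ^ m" using real_arch_pow[OF r1] by blast
    define U where "U = PiE {..<m} (\<lambda>_. {..D})"
    define P where "P u = (\<Sum>i<m. real (u i) / d ^ i)" for u :: "nat \<Rightarrow> nat"
    define key where "key u = \<lceil>P u * d ^ m\<rceil>" for u
    define N where "N = \<lceil>c * d ^ m\<rceil>"
    have finU: "finite U" unfolding U_def by (intro finite_PiE) auto
    have cardU: "card U = (D + 1) ^ m" unfolding U_def by (simp add: card_PiE)
    have Ule: "u \<in> U \<Longrightarrow> i < m \<Longrightarrow> u i \<le> D" for u i unfolding U_def by (auto simp: PiE_iff)
    have Pb: "0 \<le> P u \<and> P u \<le> c" if "u \<in> U" for u
      using prefix_bound[OF assms(3), of m u D] Ule[OF that] assms(3) unfolding P_def c_def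
      by (auto intro!: sum_nonneg divide_nonneg_pos)
    have dm: "d ^ m > 0" using assms(3) by simp
    have keyT: "key ` U \<subseteq> {0..N}"
    proof
      fix k assume "k \<in> key ` U"
      then obtain u where u: "u \<in> U" "k = key u" by blast
      have "0 \<le> P u * d ^ m" "P u * d ^ m \<le> c * d ^ m" using Pb[OF u(1)] dm by auto
      then show "k \<in> {0..N}" unfolding u key_def N_def by (auto intro: ceiling_mono)
    qed
    have cardT: "real (card {0..N}) \<le> c * d ^ m + 2"
    proof -
      have "0 \<le> c * d ^ m" using c0 dm by simp
      then have "N \<ge> 0" unfolding N_def by simp
      moreover have "of_int N \<le> c * d ^ m + 1" unfolding N_def by simp
      ultimately show ?thesis by simp
    qed
    have big: "card U > n * card {0..N}"
    proof -
      have "real n * real (card {0..N}) \<le> real n * (c * d ^ m + 2)"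
        using cardT by (intro mult_left_mono) auto
      also have "\<dots> \<le> real n * ((c + 2) * d ^ m)"
      proof -
        have "1 \<le> d ^ m" using assms(3) by simp
        then have "c * d ^ m + 2 \<le> (c + 2) * d ^ m" by (simp add: algebra_simps)
        then show ?thesis by (intro mult_left_mono) auto
      qed
      also have "\<dots> = real n * (c + 2) * d ^ m" by simp
      also have "\<dots> < r ^ m * d ^ m" using m dm by simp
      also have "\<dots> = (real D + 1) ^ m" using assms(3) by (simp add: r_def power_divide)
      finally have "real (n * card {0..N}) < real (card U)" unfolding cardU by (simp add: add.commute)
      then show ?thesis by linarith
    qed
    obtain K where K: "K \<in> {0..N}" "card {u\<in>U. key u = K} > n"
      using pigeon[OF _ keyT big finU] by auto
    define F where "F = {u\<in>U. key u = K}"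
    have FU: "F \<subseteq> U" unfolding F_def by auto
    define x where "x = of_int K / d ^ m"
    have yF: "0 \<le> (x - P u) * d ^ m \<and> (x - P u) * d ^ m < d" if "u \<in> F" for u
    proof -
      have k: "\<lceil>P u * d ^ m\<rceil> = K" using that unfolding F_def key_def by auto
      have e: "(x - P u) * d ^ m = of_int K - P u * d ^ m" unfolding x_def using dm assms(3) by (simp add: field_simps)
      have "P u * d ^ m \<le> of_int K" "of_int K < P u * d ^ m + 1"
        using k le_of_int_ceiling[of "P u * d ^ m"] ceiling_correct[of "P u * d ^ m"] by auto
      then show ?thesis unfolding e using assms(3) by linarith
    qed
    define T where "T u = (SOME t. (\<forall>i. t i \<le> D) \<and> DS t d = (x - P u) * d ^ m)" for u
    have T: "(\<forall>i. T u i \<le> D) \<and> DS (T u) d = (x - P u) * d ^ m" if "u \<in> F" for u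
    proof -
      have "\<exists>t. (\<forall>i. t i \<le> D) \<and> DS t d = (x - P u) * d ^ m"
        using greedy[of "(x - P u) * d ^ m" d] yF[OF that] assms(3) unfolding D_def by blast
      then show ?thesis unfolding T_def by (rule someI_ex)
    qed
    define Aw where "Aw u = (\<lambda>i. if i < m then u i else T u (i - m))" for u
    have AwD: "Aw u i \<le> D" if "u \<in> F" for u i
      using T[OF that] Ule[of u i] FU that unfolding Aw_def by auto
    have AwDS: "DS (Aw u) d = x" if "u \<in> F" for u
    proof -
      have "DS (Aw u) d = P u + DS (T u) d / d ^ m"
        unfolding Aw_def P_def using DS_concat[OF assms(3), of "T u" D m u] T[OF that] by auto
      also have "\<dots> = x" using T[OF that] dm assms(3) by simp
      finally show ?thesis .
    qed
    have accF: "buchi_accepts B (\<lambda>i. (Aw u i, rep x \<beta> i))" if "u \<in> F" for u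
    proof -
      have "Aw u i \<le> \<mu>" for i by (rule le_trans[OF AwD[OF that] Dmu])
      then have "\<forall>i. Aw u i \<in> {0..\<mu>}" by simp
      then show ?thesis using iff[of "Aw u" x] AwDS[OF that] by simp
    qed
    define run where "run u = (SOME r. r 0 \<in> init B \<and> (\<forall>i. (r i, (Aw u i, rep x \<beta> i), r (Suc i)) \<in> trans B)
        \<and> (\<exists>\<^sub>\<infinity>i. r i \<in> acc B))" for u
    have run: "run u 0 \<in> init B \<and> (\<forall>i. (run u i, (Aw u i, rep x \<beta> i), run u (Suc i)) \<in> trans B)
        \<and> (\<exists>\<^sub>\<infinity>i. run u i \<in> acc B)" if "u \<in> F" for u
      using accF[OF that] unfolding buchi_accepts_def run_def by (rule someI_ex)
    have "\<not> inj_on (\<lambda>u. run u m) F"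
    proof
      assume inj: "inj_on (\<lambda>u. run u m) F"
      have "(\<lambda>u. run u m) ` F \<subseteq> states B"
      proof
        fix s assume "s \<in> (\<lambda>u. run u m) ` F"
        then obtain u where u: "u \<in> F" "s = run u m" by blast
        show "s \<in> states B" unfolding u(2)
          using run[OF u(1)] by (intro run_states[OF wf, of "run u" "\<lambda>i. (Aw u i, rep x \<beta> i)" m]) auto
      qed
      then have "card F \<le> n" unfolding n_def using card_inj_on_le[OF inj _ fin] by blast
      then show False using K(2) unfolding F_def by simp
    qed
    then obtain u v where uv: "u \<in> F" "v \<in> F" "u \<noteq> v" "run u m = run v m"
      unfolding inj_on_def by blast
    define W where "W = (\<lambda>i. if i < m then Aw u i else Aw v i)"
    have "buchi_accepts B (\<lambda>i. (W i, rep x \<beta> i))"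
      unfolding W_def using run[OF uv(1)] run[OF uv(2)] uv(4)
      by (intro splice_accept[where ru="run u" and rv="run v"]) auto
    moreover have WD: "W i \<le> D" for i using AwD uv unfolding W_def by auto
    moreover have "W i \<le> \<mu>" for i by (rule le_trans[OF WD Dmu])
    then have "\<forall>i. W i \<in> {0..\<mu>}" by simp
    ultimately have DSW: "DS W d = x" using iff[of W x] by simp
    have "DS W d - (\<Sum>i<m. real (W i) / d ^ i) = DS (Aw v) d - (\<Sum>i<m. real (Aw v i) / d ^ i)"
      by (rule DS_agree[OF assms(3), of _ D]) (use WD AwD[OF uv(2)] in \<open>auto simp: W_def\<close>)
    then have "(\<Sum>i<m. real (W i) / d ^ i) = (\<Sum>i<m. real (Aw v i) / d ^ i)"
      using DSW AwDS[OF uv(2)] by simp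
    then have "P u = P v" unfolding P_def W_def Aw_def by simp
    have "\<forall>i<m. u i = v i"
    proof (rule prefix_inj[OF ab(2) apos ab(1) ab(3), of m u D v])
      show "\<And>i. i < m \<Longrightarrow> u i \<le> D" using Ule uv(1) FU by blast
      show "\<And>i. i < m \<Longrightarrow> v i \<le> D" using Ule uv(2) FU by blast
      show "int D < a" by (rule Da)
      show "(\<Sum>i<m. real (u i) / d ^ i) = (\<Sum>i<m. real (v i) / d ^ i)" using \<open>P u = P v\<close> unfolding P_def .
    qed
    then have "u = v" using PiE_ext[of u "{..<m}" "\<lambda>_. {..D}" v] uv FU unfolding U_def by auto
    then show False using uv(3) by simp
  qed
qed

end
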